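(* Let $A,p$ be real numbers with $0<A<p$. Let $\rho:(0,\infty)\to(0,\infty)$ be increasing with $x\mapsto\rho(x)/x^A$ decreasing, and let $(a_n)_{n\ge1}$ be a decreasing sequence of nonnegative numbers such that $$\sum_{n\ge1}h(a_n)\le\sum_{n\ge1}h(1/\rho(n))$$ for every increasing function $h:[0,\infty)\to[0,\infty)$ with $h(0)=0$ for which $t\mapsto h(t^p)$ is convex. Then there is a constant $C(p,A)$ depending only on $p$ and $A$ such that $a_n\le C(p,A)/\rho(n)$ for all $n\ge1$. *)

theory Defs
  imports "HOL-Analysis.Analysis"
begin

end

theory Submission
  imports Defs
begin

lemma step_bound:
  fixes \<alpha> m :: real
  assumes "0<\<alpha>" "\<alpha><1" "1 \<le> m"
  shows "(m+1) powr (-\<alpha>) \<le> ((m+1) powr (1-\<alpha>) - m powr (1-\<alpha>)) / (1-\<alpha>)"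
proof -
  have "\<exists>z. m < z \<and> z < m+1 \<and> ((m+1) powr (1-\<alpha>) - m powr (1-\<alpha>) = ((m+1) - m) * ((1-\<alpha>) * z powr ((1-\<alpha>) - 1)))"
  proof (rule MVT2)
    fix x assume "m \<le> x" "x \<le> m+1"
    then show "((\<lambda>z. z powr (1-\<alpha>)) has_real_derivative (1-\<alpha>) * x powr ((1-\<alpha>) - 1)) (at x)"
      using assms by (intro has_real_derivative_powr) auto
  qed simp
  then obtain z where z: "m < z" "z < m+1" "(m+1) powr (1-\<alpha>) - m powr (1-\<alpha>) = (1-\<alpha>) * z powr (-\<alpha>)"
    by auto
  have "(m+1) powr (-\<alpha>) \<le> z powr (-\<alpha>)"
    by (rule powr_mono2') (use assms z in auto)
  then have "(1-\<alpha>) * (m+1) powr (-\<alpha>) \<le> (1-\<alpha>) * z powr (-\<alpha>)"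
    using assms by (intro mult_left_mono) auto
  then show ?thesis using z assms by (simp add: pos_le_divide_eq mult.commute)
qed

lemma pow_sum:
  fixes \<alpha> :: real
  assumes "0<\<alpha>" "\<alpha><1"
  shows "(\<Sum>k=1..N. real k powr (-\<alpha>)) \<le> real N powr (1-\<alpha>) / (1-\<alpha>)"
proof (induction N)
  case 0
  then show ?case by simp
next
  case (Suc m)
  show ?case
  proof (cases "m = 0")
    case True
    then show ?thesis using assms by (simp add: field_simps)
  next
    case False
    have "(\<Sum>k=1..Suc m. real k powr (-\<alpha>)) = (\<Sum>k=1..m. real k powr (-\<alpha>)) + (real m + 1) powr (-\<alpha>)"
      by (simp add: add.commute)
    also have "\<dots> \<le> real m powr (1-\<alpha>) / (1-\<alpha>) + ((real m+1) powr (1-\<alpha>) - real m powr (1-\<alpha>)) / (1-\<alpha>)"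
      using Suc.IH step_bound[OF assms, of "real m"] False by (intro add_mono) auto
    also have "\<dots> = real (Suc m) powr (1-\<alpha>) / (1-\<alpha>)"
      using assms by (simp add: diff_divide_distrib add.commute)
    finally show ?thesis .
  qed
qed

lemma pow_sum2:
  fixes \<alpha> :: real
  assumes "0<\<alpha>" "\<alpha><1" "N \<ge> 1"
  shows "(\<Sum>n<N. (real N / real (Suc n)) powr \<alpha>) \<le> real N / (1-\<alpha>)"
proof -
  have "(\<Sum>n<N. (real N / real (Suc n)) powr \<alpha>) = (\<Sum>n<N. real N powr \<alpha> * real (Suc n) powr (-\<alpha>))"
    by (intro sum.cong refl) (simp add: powr_divide powr_minus_divide)
  also have "\<dots> = real N powr \<alpha> * (\<Sum>k=1..N. real k powr (-\<alpha>))"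
    by (simp add: sum_distrib_left sum.atLeast1_atMost_eq)
  also have "\<dots> \<le> real N powr \<alpha> * (real N powr (1-\<alpha>) / (1-\<alpha>))"
    by (intro mult_left_mono pow_sum assms) auto
  also have "\<dots> = real N / (1-\<alpha>)"
    using assms by (simp add: powr_add[symmetric])
  finally show ?thesis .
qed

theorem lemma2p2:
  fixes A p :: real
  assumes "0 < A" and "A < p"
  shows "\<exists>C::real. \<forall>(\<rho>::real \<Rightarrow> real) (a::nat \<Rightarrow> real).
    ((\<forall>x>0. \<rho> x > 0)
     \<and> mono_on {0<..} \<rho>
     \<and> antimono_on {0<..} (\<lambda>x. \<rho> x / x powr A)
     \<and> (\<forall>m n. 1 \<le> m \<longrightarrow> m \<le> n \<longrightarrow> a n \<le> a m)
     \<and> (\<forall>n\<ge>1. 0 \<le> a n)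
     \<and> (\<forall>h::real \<Rightarrow> real.
          (mono_on {0..} h \<and> (\<forall>t\<ge>0. 0 \<le> h t) \<and> h 0 = 0
           \<and> convex_on {0..} (\<lambda>t. h (t powr p)))
          \<longrightarrow> (\<Sum>n. ennreal (h (a (Suc n)))) \<le> (\<Sum>n. ennreal (h (1 / \<rho> (real (Suc n)))))))
    \<longrightarrow> (\<forall>n\<ge>1. a n \<le> C / \<rho> (real n))"
proof -
  define q where "q = 1/p"
  define \<alpha> where "\<alpha> = A/p"
  define K where "K = 2 + 1/(1-\<alpha>)"
  have p0: "p > 0" using assms by simp
  have q0: "q > 0" using p0 by (simp add: q_def)
  have al: "0 < \<alpha>" "\<alpha> < 1" using assms by (auto simp: \<alpha>_def)
  have K1: "K - 1 > 1/(1-\<alpha>)" by (simp add: K_def)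
  have "1/(1-\<alpha>) > 0" using al by simp
  then have Kpos: "K > 0" unfolding K_def by linarith
  have pq: "p * q = 1" using p0 by (simp add: q_def)
  have Aq: "A * q = \<alpha>" by (simp add: q_def \<alpha>_def)
  show ?thesis
  proof (intro exI[of _ "K powr p"] allI impI)
    fix \<rho> :: "real \<Rightarrow> real" and a :: "nat \<Rightarrow> real" and N :: nat
    assume H: "(\<forall>x>0. \<rho> x > 0)
     \<and> mono_on {0<..} \<rho>
     \<and> antimono_on {0<..} (\<lambda>x. \<rho> x / x powr A)
     \<and> (\<forall>m n. 1 \<le> m \<longrightarrow> m \<le> n \<longrightarrow> a n \<le> a m)
     \<and> (\<forall>n\<ge>1. 0 \<le> a n)
     \<and> (\<forall>h::real \<Rightarrow> real.
          (mono_on {0..} h \<and> (\<forall>t\<ge>0. 0 \<le> h t) \<and> h 0 = 0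
           \<and> convex_on {0..} (\<lambda>t. h (t powr p)))
          \<longrightarrow> (\<Sum>n. ennreal (h (a (Suc n)))) \<le> (\<Sum>n. ennreal (h (1 / \<rho> (real (Suc n))))))"
      and N1: "N \<ge> 1"
    have rpos: "\<And>x. x > 0 \<Longrightarrow> \<rho> x > 0" using H by auto
    have rmono: "mono_on {0<..} \<rho>" using H by auto
    have ranti: "antimono_on {0<..} (\<lambda>x. \<rho> x / x powr A)" using H by auto
    have adec: "\<And>m n. 1 \<le> m \<Longrightarrow> m \<le> n \<Longrightarrow> a n \<le> a m" using H by auto
    have anon: "\<And>n. n \<ge> 1 \<Longrightarrow> 0 \<le> a n" using H by auto
    have Hh: "\<And>h::real\<Rightarrow>real. mono_on {0..} h \<Longrightarrow> (\<forall>t\<ge>0. 0 \<le> h t) \<Longrightarrow> h 0 = 0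
           \<Longrightarrow> convex_on {0..} (\<lambda>t. h (t powr p))
          \<Longrightarrow> (\<Sum>n. ennreal (h (a (Suc n)))) \<le> (\<Sum>n. ennreal (h (1 / \<rho> (real (Suc n)))))"
      using H by blast
    show "a N \<le> K powr p / \<rho> (real N)"
    proof (rule ccontr)
      assume contra: "\<not> a N \<le> K powr p / \<rho> (real N)"
      have rN: "\<rho> (real N) > 0" using rpos N1 by auto
      define Y where "Y = (1 / \<rho> (real N)) powr q"
      have Y0: "Y > 0" using rN by (simp add: Y_def)
      define X where "X = a N powr q"
      define h where "h = (\<lambda>u::real. max 0 (u powr q - Y))"
      have XK: "X > K * Y"
      proof -
        have "K powr p * (1 / \<rho> (real N)) < a N" using contra by simp
        then have "(K powr p * (1 / \<rho> (real N))) powr q < a N powr q"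
          using Kpos rN q0 by (intro powr_less_mono2) auto
        moreover have "(K powr p * (1 / \<rho> (real N))) powr q = K * Y"
        proof -
          have "(K powr p * (1 / \<rho> (real N))) powr q = (K powr p) powr q * (1 / \<rho> (real N)) powr q"
            using Kpos rN by (intro powr_mult)
          also have "(K powr p) powr q = K" using Kpos pq by (simp add: powr_powr)
          finally show ?thesis by (simp add: Y_def)
        qed
        ultimately show ?thesis by (simp add: X_def)
      qed
      have hmono: "mono_on {0..} h"
      proof (rule mono_onI)
        fix r s :: real assume "r \<in> {0..}" "s \<in> {0..}" "r \<le> s"
        then have "r powr q \<le> s powr q" using q0 by (intro powr_mono2) auto
        then show "h r \<le> h s" unfolding h_def by simp
      qed
      have hpos: "\<forall>t\<ge>0. 0 \<le> h t" by (simp add: h_def)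
      have h0: "h 0 = 0" using Y0 q0 by (simp add: h_def)
      have hconv: "convex_on {0..} (\<lambda>t. h (t powr p))"
      proof (rule convex_onI)
        fix t x y :: real
        assume t: "0 < t" "t < 1" and xy: "x \<in> {0..}" "y \<in> {0..}"
        have id: "\<And>z::real. z \<ge> 0 \<Longrightarrow> h (z powr p) = max 0 (z - Y)"
          by (simp add: h_def powr_powr pq powr_one)
        have z: "(1 - t) *\<^sub>R x + t *\<^sub>R y \<ge> 0" using t xy by simp
        have "(1-t) * (x - Y) \<le> (1-t) * max 0 (x - Y)" using t by (intro mult_left_mono) auto
        moreover have "t * (y - Y) \<le> t * max 0 (y - Y)" using t by (intro mult_left_mono) auto
        moreover have "0 \<le> (1-t) * max 0 (x - Y) + t * max 0 (y - Y)" using t by simp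
        moreover have "(1 - t) *\<^sub>R x + t *\<^sub>R y - Y = (1-t) * (x - Y) + t * (y - Y)"
          by (simp add: algebra_simps)
        ultimately have "max 0 ((1 - t) *\<^sub>R x + t *\<^sub>R y - Y) \<le> (1-t) * max 0 (x - Y) + t * max 0 (y - Y)"
          by (intro max.boundedI) linarith+
        then show "h (((1 - t) *\<^sub>R x + t *\<^sub>R y) powr p) \<le> (1 - t) * h (x powr p) + t * h (y powr p)"
          using id[OF z] id xy by simp
      qed simp
      have main: "(\<Sum>n. ennreal (h (a (Suc n)))) \<le> (\<Sum>n. ennreal (h (1 / \<rho> (real (Suc n)))))"
        using Hh[OF hmono hpos h0 hconv] .
      have lower: "ennreal (real N * (X - Y)) \<le> (\<Sum>n. ennreal (h (a (Suc n))))"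
      proof -
        have "ennreal (real N * (X - Y)) = (\<Sum>n<N. ennreal (X - Y))"
        proof -
          have "K * Y \<ge> 1 * Y" proof (intro mult_right_mono)
            show "1 \<le> K" using K1 \<open>1/(1-\<alpha>) > 0\<close> by linarith
          qed (use Y0 in auto)
          then have "0 \<le> X - Y" using XK by linarith
          then show ?thesis by (simp add: ennreal_mult ennreal_of_nat_eq_real_of_nat)
        qed
        also have "\<dots> \<le> (\<Sum>n<N. ennreal (h (a (Suc n))))"
        proof (intro sum_mono ennreal_leI)
          fix n assume "n \<in> {..<N}"
          then have "a N \<le> a (Suc n)" by (intro adec) auto
          then have "X \<le> a (Suc n) powr q"
            unfolding X_def using anon N1 q0 by (intro powr_mono2) auto
          then show "X - Y \<le> h (a (Suc n))" by (simp add: h_def)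
        qed
        also have "\<dots> \<le> (\<Sum>n. ennreal (h (a (Suc n))))"
          by (intro sum_le_suminf) auto
        finally show ?thesis .
      qed
      have upper: "(\<Sum>n. ennreal (h (1 / \<rho> (real (Suc n))))) \<le> ennreal (Y * (real N / (1-\<alpha>)))"
      proof -
        have "(\<Sum>n. ennreal (h (1 / \<rho> (real (Suc n))))) = (\<Sum>n<N. ennreal (h (1 / \<rho> (real (Suc n)))))"
        proof (rule suminf_finite)
          fix n assume "n \<notin> {..<N}"
          then have "real N \<le> real (Suc n)" by auto
          then have "\<rho> (real N) \<le> \<rho> (real (Suc n))" using N1 by (intro mono_onD[OF rmono]) auto
          then have "1 / \<rho> (real (Suc n)) \<le> 1 / \<rho> (real N)" using rN by (intro divide_left_mono) auto
          then have "(1 / \<rho> (real (Suc n))) powr q \<le> Y" unfolding Y_def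
            using rpos[of "real (Suc n)"] q0 by (intro powr_mono2) auto
          then show "ennreal (h (1 / \<rho> (real (Suc n)))) = 0" by (simp add: h_def)
        qed simp
        also have "\<dots> \<le> (\<Sum>n<N. ennreal (Y * (real N / real (Suc n)) powr \<alpha>))"
        proof (intro sum_mono ennreal_leI)
          fix n assume "n \<in> {..<N}"
          then have le: "real (Suc n) \<le> real N" by auto
          have rs: "\<rho> (real (Suc n)) > 0" using rpos by auto
          have "\<rho> (real N) / real N powr A \<le> \<rho> (real (Suc n)) / real (Suc n) powr A"
            using monotone_onD[OF ranti _ _ le] N1 by auto
          then have "1 / \<rho> (real (Suc n)) \<le> (1 / \<rho> (real N)) * (real N / real (Suc n)) powr A"
            using rN rs N1 by (simp add: field_simps powr_divide)
          then have "(1 / \<rho> (real (Suc n))) powr q \<le> ((1 / \<rho> (real N)) * (real N / real (Suc n)) powr A) powr q"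
            using rs q0 by (intro powr_mono2) auto
          also have "\<dots> = Y * (real N / real (Suc n)) powr \<alpha>"
          proof -
            have "((1 / \<rho> (real N)) * (real N / real (Suc n)) powr A) powr q
               = (1 / \<rho> (real N)) powr q * ((real N / real (Suc n)) powr A) powr q"
              using rN by (intro powr_mult)
            then show ?thesis by (simp add: Y_def powr_powr Aq del: of_nat_Suc)
          qed
          finally have "(1 / \<rho> (real (Suc n))) powr q \<le> Y * (real N / real (Suc n)) powr \<alpha>" .
          then show "h (1 / \<rho> (real (Suc n))) \<le> Y * (real N / real (Suc n)) powr \<alpha>"
            using Y0 by (simp add: h_def)
        qed
        also have "\<dots> = ennreal (Y * (\<Sum>n<N. (real N / real (Suc n)) powr \<alpha>))"
          using Y0 by (simp add: sum_distrib_left)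
        also have "\<dots> \<le> ennreal (Y * (real N / (1-\<alpha>)))"
          using pow_sum2[OF al N1] Y0 by (intro ennreal_leI mult_left_mono) auto
        finally show ?thesis .
      qed
      have "real N * (X - Y) \<le> Y * (real N / (1-\<alpha>))"
        using order.trans[OF lower order.trans[OF main upper]] Y0 al by simp
      moreover have "real N * (X - Y) > Y * (real N / (1-\<alpha>))"
      proof -
        have "Y * (real N / (1-\<alpha>)) = real N * (Y * (1/(1-\<alpha>)))" by simp
        also have "\<dots> < real N * (Y * (K - 1))"
          using N1 Y0 K1 by (intro mult_strict_left_mono) auto
        also have "\<dots> < real N * (X - Y)"
          using N1 XK by (intro mult_strict_left_mono) (auto simp: algebra_simps)
        finally show ?thesis .
      qed
      ultimately show False by simp
    qed
  qed
qed

end
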